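(* Let $V$ be a finite dimensional real inner product space and let $X_1,\dots,X_n$ be self-adjoint elements of $\mathrm{End}(V)$ with $[X_i,X_j]=0$ for all $1\le i,j\le n$. Then there exists a constant $C>0$ such that for all $v\in V$ \[ C\Big(\sum_{i,j=1}^n\langle X_iv,v\rangle\langle X_jv,v\rangle\langle X_iv,X_jv\rangle\Big)^2\ \ge\ \Big(\sum_{i=1}^n\langle X_iv,v\rangle^2\Big)^3. \] *)

theory Defs
  imports "HOL-Analysis.Analysis"
begin

end

theory Submission
  imports Defs "HOL-Analysis.Analysis"
begin


lemma quad_zero:
  fixes r q :: real
  assumes "\<And>t. 2*t*r + t^2*q \<le> 0"
  shows "r = 0"
proof (rule ccontr)
  assume r: "r \<noteq> 0"
  define D where "D = \<bar>q\<bar>+1"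
  define t where "t = r/D"
  have pos: "D > 0" unfolding D_def by simp
  have "-D \<le> q" unfolding D_def by linarith
  from mult_left_mono[OF this zero_le_power2[of t]]
  have "t^2*q \<ge> - (t^2*D)" by simp
  moreover have "2*t*r = 2*r^2/D" unfolding t_def by (simp add: power2_eq_square)
  moreover have "t^2*D = r^2/D" unfolding t_def using pos by (simp add: power2_eq_square)
  moreover have "r^2/D > 0" using r pos by simp
  ultimately have "2*t*r + t^2*q > 0" by linarith
  with assms[of t] show False by simp
qed

lemma eig1:
  fixes f :: "'a::euclidean_space \<Rightarrow> 'a"
  assumes lf: "linear f" and sa: "\<And>u w. f u \<bullet> w = u \<bullet> f w"
    and W: "subspace W" and inv: "\<And>u. u \<in> W \<Longrightarrow> f u \<in> W" and nz: "W \<noteq> {0}"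
  shows "\<exists>v\<in>W. norm v = 1 \<and> f v = (f v \<bullet> v) *\<^sub>R v"
proof -
  let ?T = "W \<inter> sphere 0 1"
  have cT: "compact ?T"
    using closed_subspace[OF W] by (simp add: closed_Int_compact)
  obtain u where u: "u \<in> W" "u \<noteq> 0" using nz W subspace_0 by blast
  have "u /\<^sub>R norm u \<in> ?T" using u W by (simp add: subspace_scale)
  hence neT: "?T \<noteq> {}" by blast
  have cf: "continuous_on ?T (\<lambda>x. f x \<bullet> x)"
    by (intro continuous_intros linear_continuous_on lf[unfolded linear_conv_bounded_linear])
  obtain v where v: "v \<in> ?T" and vmax: "\<And>y. y \<in> ?T \<Longrightarrow> f y \<bullet> y \<le> f v \<bullet> v"
    using continuous_attains_sup[OF cT neT cf] by blast
  define \<mu> where "\<mu> = f v \<bullet> v"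
  have nv: "norm v = 1" "v \<in> W" using v by auto
  have bound: "f y \<bullet> y \<le> \<mu> * (y \<bullet> y)" if y: "y \<in> W" for y
  proof (cases "y = 0")
    case True then show ?thesis using linear_0[OF lf] by simp
  next
    case False
    let ?z = "y /\<^sub>R norm y"
    have "?z \<in> ?T" using y False W by (simp add: subspace_scale)
    hence "f ?z \<bullet> ?z \<le> \<mu>" using vmax \<mu>_def by blast
    moreover have "f ?z \<bullet> ?z = (f y \<bullet> y) / (norm y)^2"
      using linear_scale[OF lf] by (simp add: power2_eq_square divide_inverse mult_ac)
    ultimately have h: "(f y \<bullet> y) / (norm y)^2 \<le> \<mu>" by simp
    have "(norm y)^2 > 0" using False by simp
    hence "f y \<bullet> y \<le> \<mu> * (norm y)^2" using h by (simp add: divide_le_eq)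
    moreover have "y \<bullet> y = (norm y)^2" by (simp add: power2_norm_eq_inner)
    ultimately show ?thesis by simp
  qed
  have orth: "(f v - \<mu> *\<^sub>R v) \<bullet> w = 0" if w: "w \<in> W" for w
  proof -
    have "2*t*((f v - \<mu> *\<^sub>R v) \<bullet> w) + t^2*(f w \<bullet> w - \<mu> * (w \<bullet> w)) \<le> 0" for t
    proof -
      have "v + t *\<^sub>R w \<in> W" using W nv w by (simp add: subspace_add subspace_scale)
      from bound[OF this]
      have "f (v + t *\<^sub>R w) \<bullet> (v + t *\<^sub>R w) \<le> \<mu> * ((v + t *\<^sub>R w) \<bullet> (v + t *\<^sub>R w))" .
      moreover have "f (v + t *\<^sub>R w) = f v + t *\<^sub>R f w" using lf by (simp add: linear_add linear_scale)
      moreover have "v \<bullet> v = 1" using nv by (simp add: norm_eq_1)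
      moreover have "f w \<bullet> v = f v \<bullet> w" using sa[of w v] by (simp add: inner_commute)
      moreover have "(f v + t *\<^sub>R f w) \<bullet> (v + t *\<^sub>R w) = f v \<bullet> v + t * (f v \<bullet> w) + t * (f w \<bullet> v) + t*t*(f w \<bullet> w)"
        by (simp add: inner_add_left inner_add_right algebra_simps)
      moreover have "(v + t *\<^sub>R w) \<bullet> (v + t *\<^sub>R w) = v \<bullet> v + 2*t * (v \<bullet> w) + t*t*(w \<bullet> w)"
        by (simp add: inner_add_left inner_add_right algebra_simps inner_commute)
      ultimately have "f v \<bullet> v + 2* t * (f v \<bullet> w) + t*t*(f w \<bullet> w) \<le> \<mu> * (1 + 2*t * (v \<bullet> w) + t*t*(w \<bullet> w))"
        by simp
      hence "2*t*((f v \<bullet> w) - \<mu> * (v \<bullet> w)) + t*t*(f w \<bullet> w - \<mu> * (w \<bullet> w)) \<le> 0"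
        unfolding \<mu>_def by (simp add: algebra_simps)
      thus ?thesis by (simp add: inner_diff_left power2_eq_square)
    qed
    thus ?thesis using quad_zero by blast
  qed
  have "f v - \<mu> *\<^sub>R v \<in> W" using W nv inv by (simp add: subspace_diff subspace_scale)
  from orth[OF this] have "f v = \<mu> *\<^sub>R v" by simp
  thus ?thesis using nv \<mu>_def by blast
qed

lemma eig_common:
  fixes X :: "nat \<Rightarrow> 'a::euclidean_space \<Rightarrow> 'a"
  shows "finite I \<Longrightarrow> (\<forall>i\<in>I. linear (X i)) \<Longrightarrow> (\<forall>i\<in>I. \<forall>u w. X i u \<bullet> w = u \<bullet> X i w)
    \<Longrightarrow> (\<forall>i\<in>I. \<forall>j\<in>I. \<forall>u. X i (X j u) = X j (X i u))
    \<Longrightarrow> subspace W \<Longrightarrow> (\<forall>i\<in>I. \<forall>u\<in>W. X i u \<in> W) \<Longrightarrow> W \<noteq> {0}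
    \<Longrightarrow> \<exists>v\<in>W. norm v = 1 \<and> (\<forall>i\<in>I. X i v = (X i v \<bullet> v) *\<^sub>R v)"
proof (induction I arbitrary: W rule: finite_induct)
  case empty
  then obtain u where u: "u \<in> W" "u \<noteq> 0" using subspace_0 by blast
  have "u /\<^sub>R norm u \<in> W" using u empty.prems(4) by (simp add: subspace_scale)
  moreover have "norm (u /\<^sub>R norm u) = 1" using u by simp
  ultimately show ?case by blast
next
  case (insert j I)
  have L: "\<forall>i\<in>insert j I. linear (X i)" by (rule insert.prems(1))
  have SA: "\<forall>i\<in>insert j I. \<forall>u w. X i u \<bullet> w = u \<bullet> X i w" by (rule insert.prems(2))
  have CM: "\<forall>i\<in>insert j I. \<forall>k\<in>insert j I. \<forall>u. X i (X k u) = X k (X i u)" by (rule insert.prems(3))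
  have sW: "subspace W" by (rule insert.prems(4))
  have INV: "\<forall>i\<in>insert j I. \<forall>u\<in>W. X i u \<in> W" by (rule insert.prems(5))
  have NZ: "W \<noteq> {0}" by (rule insert.prems(6))
  have lj: "linear (X j)" using L by blast
  have sj: "\<And>u w. X j u \<bullet> w = u \<bullet> X j w" using SA by blast
  have invj: "\<And>u. u \<in> W \<Longrightarrow> X j u \<in> W" using INV by blast
  obtain v0 where v0: "v0 \<in> W" "norm v0 = 1" "X j v0 = (X j v0 \<bullet> v0) *\<^sub>R v0"
    using eig1[OF lj sj sW invj NZ] by blast
  define \<mu> where "\<mu> = X j v0 \<bullet> v0"
  define W' where "W' = {u \<in> W. X j u = \<mu> *\<^sub>R u}"
  have sW': "subspace W'" unfolding subspace_def
  proof (intro conjI ballI allI)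
    show "0 \<in> W'" unfolding W'_def using sW linear_0[OF lj] by (simp add: subspace_0)
  next
    fix x y assume x: "x \<in> W'" and y: "y \<in> W'"
    have "X j (x + y) = X j x + X j y" by (rule linear_add[OF lj])
    also have "\<dots> = \<mu> *\<^sub>R (x + y)" using x y unfolding W'_def by (simp add: scaleR_add_right)
    finally show "x + y \<in> W'" using x y sW unfolding W'_def by (simp add: subspace_add)
  next
    fix c x assume x: "x \<in> W'"
    have "X j (c *\<^sub>R x) = c *\<^sub>R X j x" by (rule linear_scale[OF lj])
    also have "\<dots> = \<mu> *\<^sub>R (c *\<^sub>R x)" using x unfolding W'_def by simp
    finally show "c *\<^sub>R x \<in> W'" using x sW unfolding W'_def by (simp add: subspace_scale)
  qed
  have invW': "\<forall>i\<in>I. \<forall>u\<in>W'. X i u \<in> W'"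
  proof (intro ballI)
    fix i u assume i: "i \<in> I" and u: "u \<in> W'"
    have Xu: "X i u \<in> W" using INV i u unfolding W'_def by blast
    have c1: "X j (X i u) = X i (X j u)" using CM i by blast
    have li: "linear (X i)" using L i by blast
    have "X i (X j u) = X i (\<mu> *\<^sub>R u)" using u unfolding W'_def by simp
    also have "\<dots> = \<mu> *\<^sub>R X i u" by (rule linear_scale[OF li])
    finally have "X j (X i u) = \<mu> *\<^sub>R X i u" using c1 by simp
    thus "X i u \<in> W'" using Xu unfolding W'_def by simp
  qed
  have "v0 \<in> W'" using v0 unfolding W'_def \<mu>_def by simp
  hence nz: "W' \<noteq> {0}" using v0 by auto
  have L': "\<forall>i\<in>I. linear (X i)" using L by blast
  have SA': "\<forall>i\<in>I. \<forall>u w. X i u \<bullet> w = u \<bullet> X i w" using SA by blast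
  have CM': "\<forall>i\<in>I. \<forall>k\<in>I. \<forall>u. X i (X k u) = X k (X i u)" using CM by blast
  obtain v where v: "v \<in> W'" "norm v = 1" "\<forall>i\<in>I. X i v = (X i v \<bullet> v) *\<^sub>R v"
    using insert.IH[OF L' SA' CM' sW' invW' nz] by blast
  have Xj: "X j v = \<mu> *\<^sub>R v" using v(1) unfolding W'_def by simp
  moreover have "v \<bullet> v = 1" using v by (simp add: norm_eq_1)
  ultimately have "X j v = (X j v \<bullet> v) *\<^sub>R v" by simp
  moreover have "v \<in> W" using v(1) unfolding W'_def by simp
  ultimately show ?case using v(2,3) by blast
qed

lemma eig_basis:
  fixes X :: "nat \<Rightarrow> 'a::euclidean_space \<Rightarrow> 'a"
  assumes I: "finite I" and lin: "\<forall>i\<in>I. linear (X i)" and sa: "\<forall>i\<in>I. \<forall>u w. X i u \<bullet> w = u \<bullet> X i w"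
    and cm: "\<forall>i\<in>I. \<forall>j\<in>I. \<forall>u. X i (X j u) = X j (X i u)"
  shows "subspace W \<Longrightarrow> (\<forall>i\<in>I. \<forall>u\<in>W. X i u \<in> W)
    \<Longrightarrow> \<exists>B. finite B \<and> B \<subseteq> W \<and> pairwise orthogonal B \<and> W \<subseteq> span B \<and>
        (\<forall>b\<in>B. norm b = 1 \<and> (\<forall>i\<in>I. X i b = (X i b \<bullet> b) *\<^sub>R b))"
proof (induction "dim W" arbitrary: W rule: less_induct)
  case less
  show ?case
  proof (cases "W = {0}")
    case True
    then show ?thesis by (intro exI[of _ "{}"]) auto
  next
    case False
    obtain v where v: "v \<in> W" "norm v = 1" "\<forall>i\<in>I. X i v = (X i v \<bullet> v) *\<^sub>R v"
      using eig_common[OF I lin sa cm less.prems False] by blast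
    have vv: "v \<bullet> v = 1" using v by (simp add: norm_eq_1)
    define W' where "W' = {u \<in> W. v \<bullet> u = 0}"
    have sW': "subspace W'" unfolding W'_def subspace_def
      using less.prems(1) by (auto simp: subspace_0 subspace_add subspace_scale inner_add_right)
    have invW': "\<forall>i\<in>I. \<forall>u\<in>W'. X i u \<in> W'"
    proof (intro ballI)
      fix i u assume i: "i \<in> I" and u: "u \<in> W'"
      have Xu: "X i u \<in> W" using less.prems(2) i u unfolding W'_def by auto
      have e0: "X i v \<bullet> u = v \<bullet> X i u" using sa i by blast
      obtain \<mu> where mu: "X i v = \<mu> *\<^sub>R v" using v(3) i by blast
      have "X i v \<bullet> u = \<mu> * (v \<bullet> u)" using mu by simp
      moreover have "v \<bullet> u = 0" using u unfolding W'_def by simp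
      ultimately have "v \<bullet> X i u = 0" using e0 by simp
      thus "X i u \<in> W'" using Xu unfolding W'_def by simp
    qed
    have "v \<notin> W'" using vv unfolding W'_def by auto
    hence "W' \<subset> W" using v unfolding W'_def by blast
    moreover have e1: "span W' = W'" using sW' by simp
    moreover have e2: "span W = W" using less.prems(1) by simp
    ultimately have "span W' \<subset> span W" by (simp only: e1 e2)
    hence "dim W' < dim W" by (rule dim_psubset)
    then obtain B where B: "finite B" "B \<subseteq> W'" "pairwise orthogonal B" "W' \<subseteq> span B"
        "\<forall>b\<in>B. norm b = 1 \<and> (\<forall>i\<in>I. X i b = (X i b \<bullet> b) *\<^sub>R b)"
      using less.hyps[OF _ sW' invW'] by blast
    have orthv: "orthogonal v b \<and> orthogonal b v" if "b \<in> B" for b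
      using B(2) that unfolding W'_def orthogonal_def by (auto simp: inner_commute)
    have po: "pairwise orthogonal (insert v B)"
      using B(3) orthv by (auto simp: pairwise_insert)
    have sp: "W \<subseteq> span (insert v B)"
    proof
      fix w assume w: "w \<in> W"
      have "w - (v \<bullet> w) *\<^sub>R v \<in> W'" unfolding W'_def
        using w v less.prems(1) vv by (auto simp: subspace_diff subspace_scale inner_diff_right)
      hence "w - (v \<bullet> w) *\<^sub>R v \<in> span (insert v B)" using B(4) span_mono[of B "insert v B"] by blast
      moreover have "(v \<bullet> w) *\<^sub>R v \<in> span (insert v B)" by (simp add: span_base span_scale)
      ultimately have "w - (v \<bullet> w) *\<^sub>R v + (v \<bullet> w) *\<^sub>R v \<in> span (insert v B)" by (rule span_add)
      thus "w \<in> span (insert v B)" by simp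
    qed
    show ?thesis
      apply (rule exI[of _ "insert v B"])
      using B po sp v unfolding W'_def by auto
  qed
qed



definition av :: "('a \<Rightarrow> nat \<Rightarrow> real) \<Rightarrow> 'a set \<Rightarrow> ('a \<Rightarrow> real) \<Rightarrow> nat \<Rightarrow> real" where
  "av F K p i = (\<Sum>b\<in>K. p b * F b i)"
definition Aq :: "('a \<Rightarrow> nat \<Rightarrow> real) \<Rightarrow> nat set \<Rightarrow> 'a set \<Rightarrow> ('a \<Rightarrow> real) \<Rightarrow> real" where
  "Aq F I K p = (\<Sum>i\<in>I. (av F K p i)^2)"
definition Sq :: "('a \<Rightarrow> nat \<Rightarrow> real) \<Rightarrow> nat set \<Rightarrow> 'a set \<Rightarrow> ('a \<Rightarrow> real) \<Rightarrow> real" where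
  "Sq F I K p = (\<Sum>b\<in>K. p b * (\<Sum>i\<in>I. av F K p i * F b i)^2)"

lemma Aq_nonneg: "0 \<le> Aq F I K p"
  unfolding Aq_def by (simp add: sum_nonneg)

lemma Sq_nonneg: "(\<forall>b\<in>K. 0 \<le> p b) \<Longrightarrow> 0 \<le> Sq F I K p"
  unfolding Sq_def by (simp add: sum_nonneg)

lemma Aq_alt: "Aq F I K p = (\<Sum>b\<in>K. p b * (\<Sum>i\<in>I. av F K p i * F b i))"
proof -
  have "Aq F I K p = (\<Sum>i\<in>I. av F K p i * (\<Sum>b\<in>K. p b * F b i))"
    unfolding Aq_def power2_eq_square by (simp add: av_def)
  also have "\<dots> = (\<Sum>i\<in>I. \<Sum>b\<in>K. p b * (av F K p i * F b i))"
    by (simp add: sum_distrib_left mult.left_commute)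
  also have "\<dots> = (\<Sum>b\<in>K. \<Sum>i\<in>I. p b * (av F K p i * F b i))"
    by (rule sum.swap)
  also have "\<dots> = (\<Sum>b\<in>K. p b * (\<Sum>i\<in>I. av F K p i * F b i))"
    by (simp add: sum_distrib_left)
  finally show ?thesis .
qed

lemma sq_aux: "0 \<le> (x::real) \<Longrightarrow> sqrt x * (sqrt x * m) = x * m"
proof -
  assume "0 \<le> x"
  hence "sqrt x * sqrt x = x" by simp
  hence "(sqrt x * sqrt x) * m = x * m" by simp
  thus ?thesis by (simp only: mult.assoc)
qed

lemma weighted_CS:
  fixes p \<mu> :: "'a \<Rightarrow> real"
  assumes "\<forall>b\<in>K. 0 \<le> p b"
  shows "(\<Sum>b\<in>K. p b * \<mu> b)^2 \<le> (\<Sum>b\<in>K. p b) * (\<Sum>b\<in>K. p b * (\<mu> b)^2)"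
proof -
  have "(\<Sum>b\<in>K. sqrt (p b) * (sqrt (p b) * \<mu> b))^2
     \<le> (\<Sum>b\<in>K. (sqrt (p b))^2) * (\<Sum>b\<in>K. (sqrt (p b) * \<mu> b)^2)"
    by (rule Cauchy_Schwarz_ineq_sum)
  moreover have "(\<Sum>b\<in>K. sqrt (p b) * (sqrt (p b) * \<mu> b)) = (\<Sum>b\<in>K. p b * \<mu> b)"
    using assms by (intro sum.cong) (simp_all add: sq_aux)
  moreover have "(\<Sum>b\<in>K. (sqrt (p b))^2) = (\<Sum>b\<in>K. p b)"
    using assms by (intro sum.cong) auto
  moreover have "(\<Sum>b\<in>K. (sqrt (p b) * \<mu> b)^2) = (\<Sum>b\<in>K. p b * (\<mu> b)^2)"
    using assms by (intro sum.cong) (auto simp: power_mult_distrib)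
  ultimately show ?thesis by simp
qed

lemma AS_bound: "(\<forall>b\<in>K. 0 \<le> p b) \<Longrightarrow> (Aq F I K p)^2 \<le> (\<Sum>b\<in>K. p b) * Sq F I K p"
  unfolding Aq_alt[of F I K p] Sq_def by (rule weighted_CS)

lemma coord:
  fixes K :: "'a::real_inner set"
  assumes "finite K" "\<forall>b\<in>K. norm b = 1" "pairwise orthogonal K" "b \<in> K"
  shows "(\<Sum>c\<in>K. q c *\<^sub>R c) \<bullet> b = q b"
proof -
  have "(\<Sum>c\<in>K. q c *\<^sub>R c) \<bullet> b = (\<Sum>c\<in>K. q c * (c \<bullet> b))" by (simp add: inner_sum_left)
  also have "\<dots> = q b * (b \<bullet> b) + (\<Sum>c\<in>K-{b}. q c * (c \<bullet> b))"
    using assms by (simp add: sum.remove)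
  also have "(\<Sum>c\<in>K-{b}. q c * (c \<bullet> b)) = 0"
    using assms(3,4) by (intro sum.neutral) (auto simp: pairwise_def orthogonal_def)
  also have "b \<bullet> b = 1" using assms by (simp add: norm_eq_1)
  finally show ?thesis by simp
qed

lemma av_scale: "av F K (\<lambda>b. p b / s) i = av F K p i / s"
  unfolding av_def by (simp add: sum_divide_distrib)

lemma Aq_scale: "Aq F I K (\<lambda>b. p b / s) = Aq F I K p / s^2"
  unfolding Aq_def av_scale by (simp add: sum_divide_distrib power_divide)

lemma av_cong: "(\<And>b. b \<in> K \<Longrightarrow> p b = q b) \<Longrightarrow> av F K p i = av F K q i"
  unfolding av_def by simp

lemma Aq_cong: "(\<And>b. b \<in> K \<Longrightarrow> p b = q b) \<Longrightarrow> Aq F I K p = Aq F I K q"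
  unfolding Aq_def using av_cong[of K p q F] by simp

lemma noalpha:
  fixes F :: "'a::euclidean_space \<Rightarrow> nat \<Rightarrow> real"
  assumes fin: "finite K" and nrm: "\<forall>b\<in>K. norm b = 1" and po: "pairwise orthogonal K"
   and no: "\<not>(\<exists>\<alpha>. (\<forall>b\<in>K. 0 \<le> \<alpha> b) \<and> sum \<alpha> K = 1 \<and> (\<forall>i\<in>I. av F K \<alpha> i = 0))"
   and finI: "finite I"
  shows "\<exists>d>0. \<forall>p. (\<forall>b\<in>K. 0 \<le> p b) \<longrightarrow> d * (sum p K)^2 \<le> Aq F I K p"
proof (cases "K = {}")
  case True
  then show ?thesis by (intro exI[of _ 1]) (simp add: Aq_nonneg)
next
  case False
  define T where "T = (\<Inter>b\<in>K. {x. inner b x \<ge> 0}) \<inter> {x. inner (\<Sum>K) x = 1} \<inter> cball (0::'a) 1"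
  have memT: "(\<Sum>c\<in>K. q c *\<^sub>R c) \<in> T" if q: "\<forall>b\<in>K. 0 \<le> q b" "sum q K = 1" for q
  proof -
    let ?x = "(\<Sum>c\<in>K. q c *\<^sub>R c)"
    have cx: "?x \<bullet> b = q b" if "b \<in> K" for b using coord[OF fin nrm po that] .
    have "inner (\<Sum>K) ?x = (\<Sum>b\<in>K. ?x \<bullet> b)" by (simp add: inner_sum_left inner_commute)
    also have "\<dots> = sum q K" using cx by simp
    finally have h1: "inner (\<Sum>K) ?x = 1" using q by simp
    have "norm ?x \<le> (\<Sum>c\<in>K. norm (q c *\<^sub>R c))" by (rule norm_sum)
    also have "\<dots> = sum q K" using q nrm by (intro sum.cong) auto
    finally have "norm ?x \<le> 1" using q by simp
    thus ?thesis using h1 cx q unfolding T_def by (auto simp: inner_commute)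
  qed
  have cT: "compact T" unfolding T_def
    by (intro closed_Int_compact closed_Int closed_INT ballI closed_halfspace_ge closed_hyperplane compact_cball)
  obtain b0 where b0: "b0 \<in> K" using False by blast
  have "(\<Sum>c\<in>K. (if c = b0 then 1 else 0) *\<^sub>R c) \<in> T"
    by (rule memT) (use b0 fin in auto)
  hence neT: "T \<noteq> {}" by blast
  define g where "g = (\<lambda>x. Aq F I K (\<lambda>b. x \<bullet> b))"
  have cg: "continuous_on T g" unfolding g_def Aq_def av_def
    by (intro continuous_intros)
  obtain x0 where x0: "x0 \<in> T" and xmin: "\<And>y. y \<in> T \<Longrightarrow> g x0 \<le> g y"
    using continuous_attains_inf[OF cT neT cg] by blast
  have mpos: "g x0 > 0"
  proof (rule ccontr)
    assume "\<not> g x0 > 0"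
    hence "g x0 = 0" using Aq_nonneg[of F I K] unfolding g_def by (meson not_less order_antisym)
    hence "\<forall>i\<in>I. (av F K (\<lambda>b. x0 \<bullet> b) i)^2 = 0"
      unfolding g_def Aq_def using finI by (subst (asm) sum_nonneg_eq_0_iff) auto
    hence z: "\<forall>i\<in>I. av F K (\<lambda>b. x0 \<bullet> b) i = 0" by simp
    have "\<forall>b\<in>K. 0 \<le> x0 \<bullet> b" using x0 unfolding T_def by (auto simp: inner_commute)
    moreover have "sum (\<lambda>b. x0 \<bullet> b) K = 1"
    proof -
      have "inner (\<Sum>K) x0 = 1" using x0 unfolding T_def by simp
      moreover have "inner (\<Sum>K) x0 = sum (\<lambda>b. x0 \<bullet> b) K"
        using inner_sum_left[of "\<lambda>b. b" K x0] by (simp add: inner_commute)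
      ultimately show ?thesis by simp
    qed
    ultimately show False using no z by blast
  qed
  show ?thesis
  proof (intro exI[of _ "g x0"] conjI mpos allI impI)
    fix p :: "'a \<Rightarrow> real" assume p: "\<forall>b\<in>K. 0 \<le> p b"
    define s where "s = sum p K"
    have s0: "s \<ge> 0" unfolding s_def using p by (simp add: sum_nonneg)
    show "g x0 * (sum p K)^2 \<le> Aq F I K p"
    proof (cases "s = 0")
      case True then show ?thesis unfolding s_def by (simp add: Aq_nonneg)
    next
      case False
      hence sp: "s > 0" using s0 by simp
      define q where "q = (\<lambda>b. p b / s)"
      have "\<forall>b\<in>K. 0 \<le> q b" using p sp unfolding q_def by simp
      moreover have "sum q K = 1" unfolding q_def s_def using sp s_def
        by (simp add: sum_divide_distrib[symmetric])
      ultimately have inT: "(\<Sum>c\<in>K. q c *\<^sub>R c) \<in> T" by (rule memT)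
      have "g (\<Sum>c\<in>K. q c *\<^sub>R c) = Aq F I K q"
        unfolding g_def by (rule Aq_cong) (rule coord[OF fin nrm po])
      also have "\<dots> = Aq F I K p / s^2" unfolding q_def by (rule Aq_scale)
      finally have "g x0 \<le> Aq F I K p / s^2" using xmin[OF inT] by simp
      hence "g x0 * s^2 \<le> Aq F I K p" using sp by (simp add: le_divide_eq)
      thus ?thesis unfolding s_def .
    qed
  qed
qed

lemma av_remove: "finite K \<Longrightarrow> b0 \<in> K \<Longrightarrow> p b0 = 0 \<Longrightarrow> av F K p i = av F (K-{b0}) p i"
  unfolding av_def by (simp add: sum.remove)

lemma Aq_remove: "finite K \<Longrightarrow> b0 \<in> K \<Longrightarrow> p b0 = 0 \<Longrightarrow> Aq F I K p = Aq F I (K-{b0}) p"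
  unfolding Aq_def using av_remove[of K b0 p F] by simp

lemma Sq_remove: "finite K \<Longrightarrow> b0 \<in> K \<Longrightarrow> p b0 = 0 \<Longrightarrow> Sq F I K p = Sq F I (K-{b0}) p"
  unfolding Sq_def using av_remove[of K b0 p F] by (simp add: sum.remove)

lemma reduce:
  assumes fin: "finite K" and a0: "\<forall>b\<in>K. 0 \<le> \<alpha> b" and a1: "sum \<alpha> K = 1"
    and a2: "\<forall>i\<in>I. av F K \<alpha> i = 0" and p: "\<forall>b\<in>K. 0 \<le> p b"
  shows "\<exists>b0\<in>K. \<exists>p'. (\<forall>b\<in>K. 0 \<le> p' b) \<and> p' b0 = 0 \<and> Aq F I K p' = Aq F I K p
           \<and> Sq F I K p' \<le> Sq F I K p"
proof -
  define J where "J = {b\<in>K. \<alpha> b > 0}"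
  have finJ: "finite J" using fin unfolding J_def by simp
  have neJ: "J \<noteq> {}"
  proof
    assume "J = {}"
    hence "\<forall>b\<in>K. \<alpha> b = 0" using a0 unfolding J_def by force
    hence "sum \<alpha> K = 0" by simp
    with a1 show False by simp
  qed
  define t where "t = Min ((\<lambda>b. p b / \<alpha> b) ` J)"
  have "t \<in> (\<lambda>b. p b / \<alpha> b) ` J" unfolding t_def using finJ neJ by (intro Min_in) auto
  then obtain b0 where b0: "b0 \<in> J" "t = p b0 / \<alpha> b0" by blast
  have tle: "t \<le> p b / \<alpha> b" if "b \<in> J" for b unfolding t_def using finJ that by (intro Min_le) auto
  have t0: "t \<ge> 0" using b0 p unfolding J_def by auto
  define p' where "p' = (\<lambda>b. p b - t * \<alpha> b)"
  have nn: "\<forall>b\<in>K. 0 \<le> p' b"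
  proof
    fix b assume b: "b \<in> K"
    show "0 \<le> p' b"
    proof (cases "\<alpha> b > 0")
      case True
      hence "b \<in> J" using b unfolding J_def by simp
      from tle[OF this] True have "t * \<alpha> b \<le> p b" by (simp add: le_divide_eq)
      thus ?thesis unfolding p'_def by simp
    next
      case False
      hence "\<alpha> b = 0" using a0 b by force
      thus ?thesis unfolding p'_def using p b by simp
    qed
  qed
  have z: "p' b0 = 0" unfolding p'_def using b0 unfolding J_def by auto
  have avp: "av F K p' i = av F K p i" if "i \<in> I" for i
  proof -
    have "av F K p' i = av F K p i - t * av F K \<alpha> i"
      unfolding av_def p'_def by (simp add: algebra_simps sum_subtractf sum_distrib_left)
    thus ?thesis using a2 that by simp
  qed
  have "Aq F I K p' = Aq F I K p" unfolding Aq_def using avp by simp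
  moreover have "Sq F I K p' \<le> Sq F I K p"
  proof -
    define Q where "Q = (\<lambda>b. (\<Sum>i\<in>I. av F K p i * F b i)^2)"
    have "Sq F I K p' = (\<Sum>b\<in>K. p' b * Q b)" unfolding Sq_def Q_def using avp by simp
    also have "\<dots> = Sq F I K p - t * (\<Sum>b\<in>K. \<alpha> b * Q b)"
      unfolding Sq_def Q_def p'_def by (simp add: algebra_simps sum_subtractf sum_distrib_left)
    also have "\<dots> \<le> Sq F I K p"
      using t0 a0 unfolding Q_def by (simp add: sum_nonneg)
    finally show ?thesis .
  qed
  ultimately show ?thesis using nn z b0 unfolding J_def by blast
qed

lemma key:
  fixes F :: "'a::euclidean_space \<Rightarrow> nat \<Rightarrow> real"
  assumes finI: "finite I"
  shows "finite K \<Longrightarrow> (\<forall>b\<in>K. norm b = 1) \<Longrightarrow> pairwise orthogonal K \<Longrightarrow>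
    \<exists>c>0. \<forall>p. (\<forall>b\<in>K. 0 \<le> p b) \<longrightarrow> c * (Aq F I K p)^3 \<le> (Sq F I K p)^2"
proof (induction K rule: finite_psubset_induct)
  case (psubset K)
  show ?case
  proof (cases "\<exists>\<alpha>. (\<forall>b\<in>K. 0 \<le> \<alpha> b) \<and> sum \<alpha> K = 1 \<and> (\<forall>i\<in>I. av F K \<alpha> i = 0)")
    case True
    then obtain \<alpha> where al: "\<forall>b\<in>K. 0 \<le> \<alpha> b" "sum \<alpha> K = 1" "\<forall>i\<in>I. av F K \<alpha> i = 0" by blast
    have neK: "K \<noteq> {}" using al(2) by auto
    have "\<forall>b\<in>K. \<exists>c>0. \<forall>p. (\<forall>b'\<in>K-{b}. 0 \<le> p b') \<longrightarrow> c * (Aq F I (K-{b}) p)^3 \<le> (Sq F I (K-{b}) p)^2"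
    proof
      fix b assume b: "b \<in> K"
      show "\<exists>c>0. \<forall>p. (\<forall>b'\<in>K-{b}. 0 \<le> p b') \<longrightarrow> c * (Aq F I (K-{b}) p)^3 \<le> (Sq F I (K-{b}) p)^2"
        by (rule psubset.IH) (use b psubset.prems in \<open>auto simp: pairwise_def\<close>)
    qed
    then have "\<exists>f. \<forall>b\<in>K. f b > 0 \<and> (\<forall>p. (\<forall>b'\<in>K-{b}. 0 \<le> p b') \<longrightarrow> f b * (Aq F I (K-{b}) p)^3 \<le> (Sq F I (K-{b}) p)^2)"
      by (rule bchoice)
    then obtain f where f: "\<forall>b\<in>K. f b > 0 \<and> (\<forall>p. (\<forall>b'\<in>K-{b}. 0 \<le> p b') \<longrightarrow> f b * (Aq F I (K-{b}) p)^3 \<le> (Sq F I (K-{b}) p)^2)"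
      by blast
    define c where "c = Min (f ` K)"
    have cpos: "c > 0" unfolding c_def using f neK psubset.hyps by (subst Min_gr_iff) auto
    show ?thesis
    proof (intro exI[of _ c] conjI cpos allI impI)
      fix p :: "'a \<Rightarrow> real" assume p: "\<forall>b\<in>K. 0 \<le> p b"
      obtain b0 p' where b0: "b0 \<in> K" and p': "\<forall>b\<in>K. 0 \<le> p' b" "p' b0 = 0"
        "Aq F I K p' = Aq F I K p" "Sq F I K p' \<le> Sq F I K p"
        using reduce[OF psubset.hyps(1) al p] by blast
      have cle: "c \<le> f b0" unfolding c_def using psubset.hyps b0 by simp
      have A0: "0 \<le> (Aq F I K p)^3" using Aq_nonneg by simp
      have "c * (Aq F I K p)^3 \<le> f b0 * (Aq F I K p)^3" using cle A0 by (rule mult_right_mono)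
      also have "\<dots> = f b0 * (Aq F I (K-{b0}) p')^3"
        using p' Aq_remove[of K b0 p' F I, OF psubset.hyps(1) b0 p'(2)] by simp
      also have "\<dots> \<le> (Sq F I (K-{b0}) p')^2" using f b0 p' by simp
      also have "\<dots> = (Sq F I K p')^2" using Sq_remove[of K b0 p' F I, OF psubset.hyps(1) b0 p'(2)] by simp
      also have "\<dots> \<le> (Sq F I K p)^2"
        using p'(4) Sq_nonneg[OF p'(1)] by (intro power_mono) auto
      finally show "c * (Aq F I K p)^3 \<le> (Sq F I K p)^2" .
    qed
  next
    case False
    obtain d where d: "d > 0" "\<forall>p. (\<forall>b\<in>K. 0 \<le> p b) \<longrightarrow> d * (sum p K)^2 \<le> Aq F I K p"
      using noalpha[OF psubset.hyps(1) psubset.prems(1,2) False finI] by blast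
    show ?thesis
    proof (intro exI[of _ d] conjI d(1) allI impI)
      fix p :: "'a \<Rightarrow> real" assume p: "\<forall>b\<in>K. 0 \<le> p b"
      define A where "A = Aq F I K p"
      define S where "S = Sq F I K p"
      define s where "s = sum p K"
      have A0: "A \<ge> 0" unfolding A_def by (rule Aq_nonneg)
      have S0: "S \<ge> 0" unfolding S_def by (rule Sq_nonneg[OF p])
      have s0: "s \<ge> 0" unfolding s_def using p by (simp add: sum_nonneg)
      have h1: "A^2 \<le> s * S" unfolding A_def S_def s_def by (rule AS_bound[OF p])
      have h2: "d * s^2 \<le> A" unfolding A_def s_def using d p by blast
      show "d * (Aq F I K p)^3 \<le> (Sq F I K p)^2"
      proof (cases "A = 0")
        case True then show ?thesis unfolding A_def by simp
      next
        case False
        hence Ap: "A > 0" using A0 by simp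
        have "(A^2)^2 \<le> (s*S)^2" using h1 A0 by (intro power_mono) auto
        hence "d * A^4 \<le> d * (s^2 * S^2)" using d(1) by (simp add: power_mult_distrib power_mult[symmetric])
        also have "\<dots> = (d * s^2) * S^2" by simp
        also have "\<dots> \<le> A * S^2" using h2 by (intro mult_right_mono) auto
        finally have "A * (d * A^3) \<le> A * S^2" by (simp add: power_numeral_reduce algebra_simps)
        hence "d * A^3 \<le> S^2" using Ap by simp
        thus ?thesis unfolding A_def S_def .
      qed
    qed
  qed
qed


lemma alg: "(\<Sum>i\<in>I. \<Sum>j\<in>I. (a::nat\<Rightarrow>real) i * a j * (p * (F i::real) * F j)) = p * (\<Sum>i\<in>I. a i * F i)^2"
proof -
  have "p * (\<Sum>i\<in>I. a i * F i)^2 = p * ((\<Sum>i\<in>I. a i * F i) * (\<Sum>j\<in>I. a j * F j))"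
    by (simp add: power2_eq_square)
  also have "\<dots> = p * (\<Sum>i\<in>I. \<Sum>j\<in>I. (a i * F i) * (a j * F j))"
    by (simp only: sum_product)
  also have "\<dots> = (\<Sum>i\<in>I. \<Sum>j\<in>I. p * ((a i * F i) * (a j * F j)))"
    by (simp only: sum_distrib_left)
  also have "\<dots> = (\<Sum>i\<in>I. \<Sum>j\<in>I. a i * a j * (p * F i * F j))"
    by (intro sum.cong refl) (simp add: algebra_simps)
  finally show ?thesis by simp
qed

lemma aux_div: "c * (x::real) \<le> y \<Longrightarrow> c > 0 \<Longrightarrow> x \<le> 1/c * y"
  by (simp add: pos_le_divide_eq mult.commute)

lemma parseval:
  fixes B :: "'a::euclidean_space set"
  assumes fin: "finite B" and nrm: "\<forall>b\<in>B. norm b = 1" and po: "pairwise orthogonal B"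
    and sp: "UNIV \<subseteq> span B"
  shows "v \<bullet> u = (\<Sum>b\<in>B. (v \<bullet> b) * (b \<bullet> u))"
proof -
  define r where "r = v - (\<Sum>b\<in>B. (v \<bullet> b) *\<^sub>R b)"
  have "orthogonal r b" if "b \<in> B" for b
    unfolding r_def orthogonal_def using coord[OF fin nrm po that, of "\<lambda>b. v \<bullet> b"]
    by (simp add: inner_diff_left)
  hence "orthogonal r r" using sp by (rule_tac orthogonal_to_span) auto
  hence "r = 0" by (simp add: orthogonal_def)
  hence "v = (\<Sum>b\<in>B. (v \<bullet> b) *\<^sub>R b)" unfolding r_def by simp
  hence "v \<bullet> u = (\<Sum>b\<in>B. (v \<bullet> b) *\<^sub>R b) \<bullet> u" by simp
  thus ?thesis by (simp add: inner_sum_left)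
qed

theorem theorem19:
  fixes X :: "nat \<Rightarrow> 'a::euclidean_space \<Rightarrow> 'a" and n :: nat
  assumes lin: "\<And>i. i \<in> {1..n} \<Longrightarrow> linear (X i)"
    and selfadj: "\<And>i. i \<in> {1..n} \<Longrightarrow> adjoint (X i) = X i"
    and comm: "\<And>i j. i \<in> {1..n} \<Longrightarrow> j \<in> {1..n} \<Longrightarrow> X i \<circ> X j = X j \<circ> X i"
  shows "\<exists>C>0. \<forall>v::'a.
    C * (\<Sum>i=1..n. \<Sum>j=1..n. inner (X i v) v * inner (X j v) v * inner (X i v) (X j v))\<^sup>2
      \<ge> (\<Sum>i=1..n. (inner (X i v) v)\<^sup>2) ^ 3"
proof -
  define I where "I = {1..n}"
  have finI: "finite I" unfolding I_def by simp
  have lin': "\<forall>i\<in>I. linear (X i)" using lin unfolding I_def by blast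
  have sa': "\<forall>i\<in>I. \<forall>u w. X i u \<bullet> w = u \<bullet> X i w"
  proof (intro ballI allI)
    fix i u w assume i: "i \<in> I"
    have "u \<bullet> adjoint (X i) w = X i u \<bullet> w" using adjoint_works[OF lin[of i]] i unfolding I_def by blast
    thus "X i u \<bullet> w = u \<bullet> X i w" using selfadj[of i] i unfolding I_def by simp
  qed
  have cm': "\<forall>i\<in>I. \<forall>j\<in>I. \<forall>u. X i (X j u) = X j (X i u)"
  proof (intro ballI allI)
    fix i j u assume "i \<in> I" "j \<in> I"
    hence "X i \<circ> X j = X j \<circ> X i" using comm unfolding I_def by blast
    hence "(X i \<circ> X j) u = (X j \<circ> X i) u" by simp
    thus "X i (X j u) = X j (X i u)" by simp
  qed
  obtain B where B: "finite B" "pairwise orthogonal B" "UNIV \<subseteq> span B"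
      "\<forall>b\<in>B. norm b = 1 \<and> (\<forall>i\<in>I. X i b = (X i b \<bullet> b) *\<^sub>R b)"
    using eig_basis[OF finI lin' sa' cm' subspace_UNIV] by blast
  define F where "F = (\<lambda>b i. X i b \<bullet> b)"
  have nrm: "\<forall>b\<in>B. norm b = 1" using B by blast
  obtain c where c: "c > 0" "\<forall>p. (\<forall>b\<in>B. 0 \<le> p b) \<longrightarrow> c * (Aq F I B p)^3 \<le> (Sq F I B p)^2"
    using key[OF finI B(1) nrm B(2)] by blast
  show ?thesis
  proof (intro exI[of _ "1/c"] conjI allI)
    show "1/c > 0" using c by simp
    fix v :: 'a
    define p where "p = (\<lambda>b. (v \<bullet> b)^2)"
    have pn: "\<forall>b\<in>B. 0 \<le> p b" unfolding p_def by simp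
    have PV: "\<And>u. v \<bullet> u = (\<Sum>b\<in>B. (v \<bullet> b) * (b \<bullet> u))" by (rule parseval[OF B(1) nrm B(2,3)])
    have Xw: "X i v \<bullet> w = (\<Sum>b\<in>B. (v \<bullet> b) * F b i * (b \<bullet> w))" if i: "i \<in> I" for i w
    proof -
      have "X i v \<bullet> w = v \<bullet> X i w" using sa' i by blast
      also have "\<dots> = (\<Sum>b\<in>B. (v \<bullet> b) * (b \<bullet> X i w))" by (rule PV)
      also have "\<dots> = (\<Sum>b\<in>B. (v \<bullet> b) * F b i * (b \<bullet> w))"
      proof (intro sum.cong refl)
        fix b assume b: "b \<in> B"
        have "X i b \<bullet> w = b \<bullet> X i w" using sa' i by blast
        hence "b \<bullet> X i w = X i b \<bullet> w" by simp
        also have eq: "X i b = F b i *\<^sub>R b" unfolding F_def using B(4) b i by blast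
        hence "X i b \<bullet> w = F b i * (b \<bullet> w)" by simp
        finally show "(v \<bullet> b) * (b \<bullet> X i w) = (v \<bullet> b) * F b i * (b \<bullet> w)" by simp
      qed
      finally show ?thesis .
    qed
    have bX: "b \<bullet> X j v = F b j * (b \<bullet> v)" if "b \<in> B" "j \<in> I" for b j
    proof -
      have "X j b \<bullet> v = b \<bullet> X j v" using sa' that by blast
      hence "b \<bullet> X j v = X j b \<bullet> v" by simp
      also have eq: "X j b = F b j *\<^sub>R b" unfolding F_def using B(4) that by blast
      hence "X j b \<bullet> v = F b j * (b \<bullet> v)" by simp
      finally show ?thesis .
    qed
    have ai: "X i v \<bullet> v = av F B p i" if "i \<in> I" for i
      unfolding Xw[OF that] av_def p_def
      by (intro sum.cong refl) (simp add: power2_eq_square inner_commute[of _ v])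
    have aij: "X i v \<bullet> X j v = (\<Sum>b\<in>B. p b * F b i * F b j)" if "i \<in> I" "j \<in> I" for i j
      unfolding Xw[OF that(1)] p_def
      by (intro sum.cong refl) (simp add: bX that power2_eq_square inner_commute[of _ v])
    define a where "a = av F B p"
    have lhs: "(\<Sum>i\<in>I. \<Sum>j\<in>I. inner (X i v) v * inner (X j v) v * inner (X i v) (X j v)) = Sq F I B p"
    proof -
      have "(\<Sum>i\<in>I. \<Sum>j\<in>I. inner (X i v) v * inner (X j v) v * inner (X i v) (X j v))
          = (\<Sum>i\<in>I. \<Sum>j\<in>I. \<Sum>b\<in>B. a i * a j * (p b * F b i * F b j))"
      proof (intro sum.cong refl)
        fix i j assume i: "i \<in> I" and j: "j \<in> I"
        show "inner (X i v) v * inner (X j v) v * inner (X i v) (X j v) = (\<Sum>b\<in>B. a i * a j * (p b * F b i * F b j))"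
          unfolding ai[OF i] ai[OF j] aij[OF i j] a_def by (rule sum_distrib_left)
      qed
      also have "\<dots> = (\<Sum>i\<in>I. \<Sum>b\<in>B. \<Sum>j\<in>I. a i * a j * (p b * F b i * F b j))"
        by (rule sum.cong[OF refl]) (rule sum.swap)
      also have "\<dots> = (\<Sum>b\<in>B. \<Sum>i\<in>I. \<Sum>j\<in>I. a i * a j * (p b * F b i * F b j))"
        by (rule sum.swap)
      also have "\<dots> = (\<Sum>b\<in>B. p b * (\<Sum>i\<in>I. a i * F b i)^2)"
      proof (intro sum.cong refl)
        fix b
        show "(\<Sum>i\<in>I. \<Sum>j\<in>I. a i * a j * (p b * F b i * F b j)) = p b * (\<Sum>i\<in>I. a i * F b i)^2"
          by (rule alg)
      qed
      also have "\<dots> = Sq F I B p" unfolding Sq_def a_def ..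
      finally show ?thesis .
    qed
    have rhs: "(\<Sum>i\<in>I. (inner (X i v) v)^2) = Aq F I B p"
      unfolding Aq_def using ai by simp
    have "c * (Aq F I B p)^3 \<le> (Sq F I B p)^2" using c pn by blast
    hence h: "(Aq F I B p)^3 \<le> 1/c * (Sq F I B p)^2" using c(1) by (rule aux_div)
    have L: "(\<Sum>i=1..n. \<Sum>j=1..n. inner (X i v) v * inner (X j v) v * inner (X i v) (X j v)) = Sq F I B p"
      using lhs unfolding I_def .
    have R: "(\<Sum>i=1..n. (inner (X i v) v)\<^sup>2) = Aq F I B p"
      using rhs unfolding I_def .
    show "1/c * (\<Sum>i=1..n. \<Sum>j=1..n. inner (X i v) v * inner (X j v) v * inner (X i v) (X j v))\<^sup>2
      \<ge> (\<Sum>i=1..n. (inner (X i v) v)\<^sup>2) ^ 3"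
      unfolding L R by (rule h)
  qed
qed

end
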